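(* Let $Q$ be a quantale, $M$ and $N$ left $Q$-modules, and $f:M\to N$ a $Q$-module homomorphism with residuum $f_*:N\to M$ and associated nucleus $\gamma=f_*\circ f$. Then the image $M_\gamma=\gamma[M]$ coincides with the set of $\ker f$-saturated elements of $M$.
   Context: A quantale is a complete lattice with a monoid product distributing over arbitrary joins; a left $Q$-module is a complete lattice $M$ with an associative unital action of $Q$ distributing over joins in each argument; a $Q$-module homomorphism preserves arbitrary joins and the action. The residuum of a join-preserving map $f$ is $f_*(y)=\bigvee\{x\mid f(x)\le y\}$. $\ker f=\{(v,w)\in M^2\mid f(v)=f(w)\}$. For $R\subseteq M^2$, $s\in M$ is $R$-saturated if for all $(v,w)\in R$ and all $a\in Q$: $av\le s$ iff $aw\le s$. *)

theory Defs
  imports Main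
begin

definition quantale :: "('q::complete_lattice \<Rightarrow> 'q \<Rightarrow> 'q) \<Rightarrow> 'q \<Rightarrow> bool" where
  "quantale mult e \<longleftrightarrow>
     (\<forall>a b c. mult (mult a b) c = mult a (mult b c)) \<and>
     (\<forall>a. mult e a = a \<and> mult a e = a) \<and>
     (\<forall>a B. mult a (Sup B) = Sup ((\<lambda>b. mult a b) ` B)) \<and>
     (\<forall>A b. mult (Sup A) b = Sup ((\<lambda>a. mult a b) ` A))"

definition left_module ::
  "('q::complete_lattice \<Rightarrow> 'q \<Rightarrow> 'q) \<Rightarrow> 'q \<Rightarrow> ('q \<Rightarrow> 'm::complete_lattice \<Rightarrow> 'm) \<Rightarrow> bool" where
  "left_module mult e act \<longleftrightarrow>
     (\<forall>a b x. act (mult a b) x = act a (act b x)) \<and>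
     (\<forall>x. act e x = x) \<and>
     (\<forall>a X. act a (Sup X) = Sup (act a ` X)) \<and>
     (\<forall>A x. act (Sup A) x = Sup ((\<lambda>a. act a x) ` A))"

definition module_hom ::
  "('q \<Rightarrow> 'm::complete_lattice \<Rightarrow> 'm) \<Rightarrow> ('q \<Rightarrow> 'n::complete_lattice \<Rightarrow> 'n) \<Rightarrow> ('m \<Rightarrow> 'n) \<Rightarrow> bool" where
  "module_hom actM actN f \<longleftrightarrow>
     (\<forall>X. f (Sup X) = Sup (f ` X)) \<and> (\<forall>a x. f (actM a x) = actN a (f x))"

definition residuum :: "('m::complete_lattice \<Rightarrow> 'n::complete_lattice) \<Rightarrow> 'n \<Rightarrow> 'm" where
  "residuum f y = Sup {x. f x \<le> y}"

definition kernel :: "('m \<Rightarrow> 'n) \<Rightarrow> ('m \<times> 'm) set" where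
  "kernel f = {(v, w). f v = f w}"

definition saturated :: "('q \<Rightarrow> 'm::complete_lattice \<Rightarrow> 'm) \<Rightarrow> ('m \<times> 'm) set \<Rightarrow> 'm \<Rightarrow> bool" where
  "saturated act R s \<longleftrightarrow> (\<forall>(v, w) \<in> R. \<forall>a. act a v \<le> s \<longleftrightarrow> act a w \<le> s)"

end

theory Submission
  imports Defs
begin

lemma hom_mono:
  assumes "\<forall>X. f (Sup X) = Sup (f ` X)" and "(x::'m::complete_lattice) \<le> y"
  shows "(f x :: 'n::complete_lattice) \<le> f y"
proof -
  have "f y = f (Sup {x, y})" using assms(2) by (simp add: sup_absorb2)
  also have "\<dots> = sup (f x) (f y)" using assms(1)[rule_format, of "{x, y}"] by simp
  finally show ?thesis by (metis sup.cobounded1)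
qed

lemma galois:
  assumes h: "\<forall>X. f (Sup X) = Sup (f ` X)"
  shows "(x \<le> residuum f y) \<longleftrightarrow> ((f x :: 'n::complete_lattice) \<le> y)"
proof
  assume "x \<le> residuum f y"
  hence "f x \<le> f (residuum f y)" using hom_mono[OF h] by blast
  also have "\<dots> = Sup (f ` {x. f x \<le> y})" using h by (simp add: residuum_def)
  also have "\<dots> \<le> y" by (auto intro: Sup_least)
  finally show "f x \<le> y" .
next
  assume "f x \<le> y" thus "x \<le> residuum f y" unfolding residuum_def by (auto intro: Sup_upper)
qed

theorem lemma1p7:
  fixes mult :: "'q::complete_lattice \<Rightarrow> 'q \<Rightarrow> 'q" and e :: 'q
    and actM :: "'q \<Rightarrow> 'm::complete_lattice \<Rightarrow> 'm"
    and actN :: "'q \<Rightarrow> 'n::complete_lattice \<Rightarrow> 'n"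
    and f :: "'m \<Rightarrow> 'n"
  assumes "quantale mult e"
    and "left_module mult e actM"
    and "left_module mult e actN"
    and "module_hom actM actN f"
  shows "(residuum f \<circ> f) ` UNIV = {s. saturated actM (kernel f) s}"
proof -
  have h: "\<forall>X. f (Sup X) = Sup (f ` X)" and ha: "\<And>a x. f (actM a x) = actN a (f x)"
    using assms(4) unfolding module_hom_def by auto
  have eM: "\<And>x. actM e x = x" using assms(2) unfolding left_module_def by auto
  note G = galois[OF h]
  show ?thesis
  proof (intro equalityI subsetI)
    fix s assume "s \<in> (residuum f \<circ> f) ` UNIV"
    then obtain m where s: "s = residuum f (f m)" by auto
    show "s \<in> {s. saturated actM (kernel f) s}"
      unfolding saturated_def kernel_def s using G ha by auto
  next
    fix s assume "s \<in> {s. saturated actM (kernel f) s}"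
    hence sat: "saturated actM (kernel f) s" by simp
    let ?g = "residuum f (f s)"
    have le1: "s \<le> ?g" using G by simp
    have "f ?g \<le> f s" using G by blast
    moreover have "f s \<le> f ?g" using hom_mono[OF h le1] .
    ultimately have "f s = f ?g" by (simp add: order_antisym)
    hence "(s, ?g) \<in> kernel f" by (simp add: kernel_def)
    hence "actM e s \<le> s \<longleftrightarrow> actM e ?g \<le> s" using sat unfolding saturated_def by blast
    hence "?g \<le> s" using eM by simp
    hence "s = ?g" using le1 by (rule antisym[rotated])
    thus "s \<in> (residuum f \<circ> f) ` UNIV" by auto
  qed
qed

end
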